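(* Let $T$ be the 2-monad on $\mathrm{Cat}$ whose strict algebras are strict monoidal categories (and strict algebra morphisms strict monoidal functors). A strict monoidal category is a pie $T$-algebra if and only if its underlying monoid of objects is a free monoid; that is, if and only if it is a (many-sorted) PRO.
   Context: For a 2-monad $T$ with rank on a complete and cocomplete 2-category $\mathcal C$, $T\text{-Alg}_s$ denotes strict $T$-algebras and strict morphisms, and $T\text{-Alg}$ strict $T$-algebras and pseudomorphisms (algebra morphisms preserving the structure up to coherent invertible 2-cells; here, strong monoidal functors). The inclusion $T\text{-Alg}_s\to T\text{-Alg}$ has a left 2-adjoint $Q$, giving a 2-comonad $Q$ on $T\text{-Alg}_s$; a $T$-algebra is pie if it admits the structure of a strict $Q$-coalgebra. *)

theory Defs
  imports Main
begin

record ('o, 'm) smc =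
  s_ob   :: "'o set"
  s_ar   :: "'m set"
  s_dom  :: "'m \<Rightarrow> 'o"
  s_cod  :: "'m \<Rightarrow> 'o"
  s_id   :: "'o \<Rightarrow> 'm"
  s_comp :: "'m \<Rightarrow> 'm \<Rightarrow> 'm"   (* s_comp g f = g o f *)
  s_tob  :: "'o \<Rightarrow> 'o \<Rightarrow> 'o"
  s_tar  :: "'m \<Rightarrow> 'm \<Rightarrow> 'm"
  s_unit :: "'o"

definition is_category :: "('o, 'm) smc \<Rightarrow> bool" where
  "is_category C \<longleftrightarrow>
     (\<forall>f\<in>s_ar C. s_dom C f \<in> s_ob C \<and> s_cod C f \<in> s_ob C) \<and>
     (\<forall>a\<in>s_ob C. s_id C a \<in> s_ar C \<and> s_dom C (s_id C a) = a \<and> s_cod C (s_id C a) = a) \<and>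
     (\<forall>f\<in>s_ar C. \<forall>g\<in>s_ar C. s_dom C g = s_cod C f \<longrightarrow>
        s_comp C g f \<in> s_ar C \<and> s_dom C (s_comp C g f) = s_dom C f \<and>
        s_cod C (s_comp C g f) = s_cod C g) \<and>
     (\<forall>f\<in>s_ar C. s_comp C f (s_id C (s_dom C f)) = f \<and> s_comp C (s_id C (s_cod C f)) f = f) \<and>
     (\<forall>f\<in>s_ar C. \<forall>g\<in>s_ar C. \<forall>h\<in>s_ar C. s_dom C g = s_cod C f \<longrightarrow> s_dom C h = s_cod C g \<longrightarrow>
        s_comp C h (s_comp C g f) = s_comp C (s_comp C h g) f)"

definition is_smc :: "('o, 'm) smc \<Rightarrow> bool" where
  "is_smc C \<longleftrightarrow> is_category C \<and>
     s_unit C \<in> s_ob C \<and>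
     (\<forall>a\<in>s_ob C. \<forall>b\<in>s_ob C. s_tob C a b \<in> s_ob C) \<and>
     (\<forall>f\<in>s_ar C. \<forall>g\<in>s_ar C. s_tar C f g \<in> s_ar C \<and>
        s_dom C (s_tar C f g) = s_tob C (s_dom C f) (s_dom C g) \<and>
        s_cod C (s_tar C f g) = s_tob C (s_cod C f) (s_cod C g)) \<and>
     (\<forall>a\<in>s_ob C. \<forall>b\<in>s_ob C. \<forall>c\<in>s_ob C. s_tob C (s_tob C a b) c = s_tob C a (s_tob C b c)) \<and>
     (\<forall>a\<in>s_ob C. s_tob C (s_unit C) a = a \<and> s_tob C a (s_unit C) = a) \<and>
     (\<forall>f\<in>s_ar C. \<forall>g\<in>s_ar C. \<forall>h\<in>s_ar C. s_tar C (s_tar C f g) h = s_tar C f (s_tar C g h)) \<and>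
     (\<forall>f\<in>s_ar C. s_tar C (s_id C (s_unit C)) f = f \<and> s_tar C f (s_id C (s_unit C)) = f) \<and>
     (\<forall>a\<in>s_ob C. \<forall>b\<in>s_ob C. s_tar C (s_id C a) (s_id C b) = s_id C (s_tob C a b)) \<and>
     (\<forall>f\<in>s_ar C. \<forall>g\<in>s_ar C. \<forall>f'\<in>s_ar C. \<forall>g'\<in>s_ar C.
        s_dom C g = s_cod C f \<longrightarrow> s_dom C g' = s_cod C f' \<longrightarrow>
        s_tar C (s_comp C g f) (s_comp C g' f') = s_comp C (s_tar C g g') (s_tar C f f'))"

definition strict_monoidal_functor ::
  "('o, 'm) smc \<Rightarrow> ('p, 'n) smc \<Rightarrow> ('o \<Rightarrow> 'p) \<Rightarrow> ('m \<Rightarrow> 'n) \<Rightarrow> bool" where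
  "strict_monoidal_functor C D Fo Fm \<longleftrightarrow>
     (\<forall>a\<in>s_ob C. Fo a \<in> s_ob D) \<and>
     (\<forall>f\<in>s_ar C. Fm f \<in> s_ar D \<and> s_dom D (Fm f) = Fo (s_dom C f) \<and> s_cod D (Fm f) = Fo (s_cod C f)) \<and>
     (\<forall>a\<in>s_ob C. Fm (s_id C a) = s_id D (Fo a)) \<and>
     (\<forall>f\<in>s_ar C. \<forall>g\<in>s_ar C. s_dom C g = s_cod C f \<longrightarrow> Fm (s_comp C g f) = s_comp D (Fm g) (Fm f)) \<and>
     Fo (s_unit C) = s_unit D \<and>
     (\<forall>a\<in>s_ob C. \<forall>b\<in>s_ob C. Fo (s_tob C a b) = s_tob D (Fo a) (Fo b)) \<and>
     (\<forall>f\<in>s_ar C. \<forall>g\<in>s_ar C. Fm (s_tar C f g) = s_tar D (Fm f) (Fm g))"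

section \<open>The comonad Q on T-Alg_s (pseudomorphism classifier for strict monoidal categories)\<close>

definition tens :: "('o, 'm) smc \<Rightarrow> 'o list \<Rightarrow> 'o" where
  "tens C xs = foldr (s_tob C) xs (s_unit C)"

text \<open>Q A: objects are finite lists of objects of A (the free monoid on Ob A); a morphism
  as \<rightarrow> bs is a morphism tens as \<rightarrow> tens bs of A, recorded as a triple (as, bs, f).\<close>
definition Qsmc :: "('o, 'm) smc \<Rightarrow> ('o list, 'o list \<times> 'o list \<times> 'm) smc" where
  "Qsmc C = \<lparr>
     s_ob = lists (s_ob C),
     s_ar = {(as, bs, f). as \<in> lists (s_ob C) \<and> bs \<in> lists (s_ob C) \<and> f \<in> s_ar C \<and>
                          s_dom C f = tens C as \<and> s_cod C f = tens C bs},
     s_dom = (\<lambda>(as, bs, f). as),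
     s_cod = (\<lambda>(as, bs, f). bs),
     s_id = (\<lambda>as. (as, as, s_id C (tens C as))),
     s_comp = (\<lambda>(bs, cs, g) (as, bs', f). (as, cs, s_comp C g f)),
     s_tob = (@),
     s_tar = (\<lambda>(as, bs, f) (as', bs', f'). (as @ as', bs @ bs', s_tar C f f')),
     s_unit = [] \<rparr>"

definition eps_ob :: "('o, 'm) smc \<Rightarrow> 'o list \<Rightarrow> 'o" where
  "eps_ob C = tens C"
definition eps_ar :: "'o list \<times> 'o list \<times> 'm \<Rightarrow> 'm" where
  "eps_ar = (\<lambda>(as, bs, f). f)"

definition delta_ob :: "'o list \<Rightarrow> 'o list list" where
  "delta_ob as = map (\<lambda>x. [x]) as"
definition delta_ar :: "'o list \<times> 'o list \<times> 'm \<Rightarrow>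
     'o list list \<times> 'o list list \<times> ('o list \<times> 'o list \<times> 'm)" where
  "delta_ar = (\<lambda>(as, bs, f). (delta_ob as, delta_ob bs, (as, bs, f)))"

definition Q_ob :: "('o \<Rightarrow> 'p) \<Rightarrow> 'o list \<Rightarrow> 'p list" where
  "Q_ob Fo = map Fo"
definition Q_ar :: "('o \<Rightarrow> 'p) \<Rightarrow> ('m \<Rightarrow> 'n) \<Rightarrow> 'o list \<times> 'o list \<times> 'm \<Rightarrow> 'p list \<times> 'p list \<times> 'n" where
  "Q_ar Fo Fm = (\<lambda>(as, bs, f). (map Fo as, map Fo bs, Fm f))"

definition Q_coalgebra :: "('o, 'm) smc \<Rightarrow> ('o \<Rightarrow> 'o list) \<Rightarrow> ('m \<Rightarrow> 'o list \<times> 'o list \<times> 'm) \<Rightarrow> bool" where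
  "Q_coalgebra C so sm \<longleftrightarrow>
     strict_monoidal_functor C (Qsmc C) so sm \<and>
     (\<forall>a\<in>s_ob C. eps_ob C (so a) = a) \<and>
     (\<forall>f\<in>s_ar C. eps_ar (sm f) = f) \<and>
     (\<forall>a\<in>s_ob C. delta_ob (so a) = Q_ob so (so a)) \<and>
     (\<forall>f\<in>s_ar C. delta_ar (sm f) = Q_ar so sm (sm f))"

definition pie_algebra :: "('o, 'm) smc \<Rightarrow> bool" where
  "pie_algebra C \<longleftrightarrow> (\<exists>so sm. Q_coalgebra C so sm)"

definition free_monoid_of_objects :: "('o, 'm) smc \<Rightarrow> bool" where
  "free_monoid_of_objects C \<longleftrightarrow> (\<exists>X \<subseteq> s_ob C. bij_betw (tens C) (lists X) (s_ob C))"

end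

theory Submission
  imports Defs
begin

lemma tens_in:
  assumes "is_smc C" "xs \<in> lists (s_ob C)"
  shows "tens C xs \<in> s_ob C"
  using assms(2)
proof (induction xs)
  case Nil then show ?case using assms(1) by (simp add: tens_def is_smc_def)
next
  case (Cons x xs) then show ?case using assms(1) by (simp add: tens_def is_smc_def)
qed

lemma tens_append:
  assumes "is_smc C" "xs \<in> lists (s_ob C)" "ys \<in> lists (s_ob C)"
  shows "tens C (xs @ ys) = s_tob C (tens C xs) (tens C ys)"
  using assms(2)
proof (induction xs)
  case Nil then show ?case using assms(1) tens_in[OF assms(1) assms(3)]
    by (simp add: tens_def is_smc_def)
next
  case (Cons x xs)
  have "tens C xs \<in> s_ob C" using Cons tens_in[OF assms(1)] by simp
  moreover have "tens C ys \<in> s_ob C" using tens_in[OF assms(1) assms(3)] .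
  ultimately show ?case using Cons assms(1)
    by (simp add: tens_def is_smc_def)
qed

lemma so_tens:
  assumes "is_smc C" "strict_monoidal_functor C (Qsmc C) so sm" "xs \<in> lists (s_ob C)"
  shows "so (tens C xs) = concat (map so xs)"
  using assms(3)
proof (induction xs)
  case Nil then show ?case using assms(2) by (simp add: tens_def strict_monoidal_functor_def Qsmc_def)
next
  case (Cons x xs)
  have "tens C xs \<in> s_ob C" using Cons tens_in[OF assms(1)] by simp
  then have "so (tens C (x # xs)) = so x @ so (tens C xs)"
    using Cons assms(2) by (simp add: tens_def strict_monoidal_functor_def Qsmc_def)
  then show ?case using Cons by simp
qed

lemma pie_free:
  assumes "is_smc C" "Q_coalgebra C so sm"
  shows "free_monoid_of_objects C"
proof -
  have F: "strict_monoidal_functor C (Qsmc C) so sm" using assms(2) by (simp add: Q_coalgebra_def)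
  have E: "\<And>a. a \<in> s_ob C \<Longrightarrow> tens C (so a) = a" using assms(2) by (simp add: Q_coalgebra_def eps_ob_def)
  have D: "\<And>a. a \<in> s_ob C \<Longrightarrow> map (\<lambda>x. [x]) (so a) = map so (so a)"
    using assms(2) by (simp add: Q_coalgebra_def delta_ob_def Q_ob_def)
  have L: "\<And>a. a \<in> s_ob C \<Longrightarrow> so a \<in> lists (s_ob C)"
    using F by (simp add: strict_monoidal_functor_def Qsmc_def)
  define X where "X = {x \<in> s_ob C. so x = [x]}"
  have XO: "X \<subseteq> s_ob C" by (auto simp: X_def)
  have SX: "\<And>a. a \<in> s_ob C \<Longrightarrow> so a \<in> lists X"
  proof -
    fix a assume a: "a \<in> s_ob C"
    have "\<forall>x\<in>set (so a). so x = [x]" using D[OF a] by (metis map_eq_conv)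
    then show "so a \<in> lists X" using L[OF a] by (auto simp: X_def)
  qed
  have "bij_betw (tens C) (lists X) (s_ob C)"
  proof (rule bij_betw_imageI)
    show "inj_on (tens C) (lists X)"
    proof (rule inj_onI)
      fix xs ys assume xs: "xs \<in> lists X" and ys: "ys \<in> lists X" and eq: "tens C xs = tens C ys"
      have "\<And>zs. zs \<in> lists X \<Longrightarrow> so (tens C zs) = zs"
      proof -
        fix zs assume zs: "zs \<in> lists X"
        then have "zs \<in> lists (s_ob C)" using XO by auto
        then have "so (tens C zs) = concat (map so zs)" using so_tens[OF assms(1) F] by simp
        also have "map so zs = map (\<lambda>x. [x]) zs" using zs by (auto simp: X_def)
        finally show "so (tens C zs) = zs" by simp
      qed
      then show "xs = ys" using xs ys eq by metis
    qed
    show "tens C ` lists X = s_ob C"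
    proof
      show "tens C ` lists X \<subseteq> s_ob C" using tens_in[OF assms(1)] XO by auto
      show "s_ob C \<subseteq> tens C ` lists X"
      proof
        fix a assume "a \<in> s_ob C"
        then show "a \<in> tens C ` lists X" using E SX by (metis imageI)
      qed
    qed
  qed
  then show ?thesis using XO by (auto simp: free_monoid_of_objects_def)
qed

lemma free_pie:
  assumes C: "is_smc C" and X: "X \<subseteq> s_ob C" and B: "bij_betw (tens C) (lists X) (s_ob C)"
  shows "pie_algebra C"
proof -
  define so where "so = inv_into (lists X) (tens C)"
  define sm where "sm = (\<lambda>f. (so (s_dom C f), so (s_cod C f), f))"
  have LX: "\<And>a. a \<in> s_ob C \<Longrightarrow> so a \<in> lists X"
    using B by (metis bij_betw_def inv_into_into so_def)
  have LO: "\<And>a. a \<in> s_ob C \<Longrightarrow> so a \<in> lists (s_ob C)" using LX X by blast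
  have E: "\<And>a. a \<in> s_ob C \<Longrightarrow> tens C (so a) = a"
    using B by (metis bij_betw_def f_inv_into_f so_def)
  have I: "\<And>xs. xs \<in> lists X \<Longrightarrow> so (tens C xs) = xs"
    using B by (metis bij_betw_def inv_into_f_f so_def)
  have XL: "\<And>xs. xs \<in> lists X \<Longrightarrow> xs \<in> lists (s_ob C)" using X by blast
  have cat: "is_category C" using C by (simp add: is_smc_def)
  have u: "so (s_unit C) = []" using I[of "[]"] by (simp add: tens_def)
  have t: "\<And>a b. a \<in> s_ob C \<Longrightarrow> b \<in> s_ob C \<Longrightarrow> so (s_tob C a b) = so a @ so b"
  proof -
    fix a b assume a: "a \<in> s_ob C" and b: "b \<in> s_ob C"
    have "tens C (so a @ so b) = s_tob C a b"
      using tens_append[OF C LO[OF a] LO[OF b]] E a b by simp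
    moreover have "so a @ so b \<in> lists X" using LX a b by simp
    ultimately show "so (s_tob C a b) = so a @ so b" using I by metis
  qed
  have sx: "\<And>x. x \<in> X \<Longrightarrow> so x = [x]"
  proof -
    fix x assume x: "x \<in> X"
    have "tens C [x] = x" using x X C by (auto simp: tens_def is_smc_def)
    then show "so x = [x]" using I[of "[x]"] x by simp
  qed
  have F: "strict_monoidal_functor C (Qsmc C) so sm"
    unfolding strict_monoidal_functor_def
  proof (intro conjI ballI impI)
    fix a assume "a \<in> s_ob C" then show "so a \<in> s_ob (Qsmc C)" using LO by (simp add: Qsmc_def)
  next
    fix f assume f: "f \<in> s_ar C"
    then have "s_dom C f \<in> s_ob C" "s_cod C f \<in> s_ob C" using cat by (auto simp: is_category_def)
    then show "sm f \<in> s_ar (Qsmc C)"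
      using f LO E by (simp add: Qsmc_def sm_def)
  next
    fix f assume f: "f \<in> s_ar C"
    show "s_dom (Qsmc C) (sm f) = so (s_dom C f)" by (simp add: Qsmc_def sm_def)
  next
    fix f assume f: "f \<in> s_ar C"
    show "s_cod (Qsmc C) (sm f) = so (s_cod C f)" by (simp add: Qsmc_def sm_def)
  next
    fix a assume a: "a \<in> s_ob C"
    then show "sm (s_id C a) = s_id (Qsmc C) (so a)"
      using cat E by (simp add: Qsmc_def sm_def is_category_def)
  next
    fix f g assume f: "f \<in> s_ar C" and g: "g \<in> s_ar C" and fg: "s_dom C g = s_cod C f"
    then show "sm (s_comp C g f) = s_comp (Qsmc C) (sm g) (sm f)"
      using cat by (simp add: Qsmc_def sm_def is_category_def)
  next
    show "so (s_unit C) = s_unit (Qsmc C)" using u by (simp add: Qsmc_def)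
  next
    fix a b assume "a \<in> s_ob C" "b \<in> s_ob C"
    then show "so (s_tob C a b) = s_tob (Qsmc C) (so a) (so b)" using t by (simp add: Qsmc_def)
  next
    fix f g assume f: "f \<in> s_ar C" and g: "g \<in> s_ar C"
    then have "s_dom C f \<in> s_ob C" "s_cod C f \<in> s_ob C" "s_dom C g \<in> s_ob C" "s_cod C g \<in> s_ob C"
      using cat by (auto simp: is_category_def)
    then show "sm (s_tar C f g) = s_tar (Qsmc C) (sm f) (sm g)"
      using f g C t by (simp add: Qsmc_def sm_def is_smc_def)
  qed
  have "Q_coalgebra C so sm"
    unfolding Q_coalgebra_def
  proof (intro conjI ballI)
    show "strict_monoidal_functor C (Qsmc C) so sm" by (rule F)
  next
    fix a assume "a \<in> s_ob C" then show "eps_ob C (so a) = a" using E by (simp add: eps_ob_def)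
  next
    fix f assume "f \<in> s_ar C" then show "eps_ar (sm f) = f" by (simp add: eps_ar_def sm_def)
  next
    fix a assume a: "a \<in> s_ob C"
    show "delta_ob (so a) = Q_ob so (so a)"
      using LX[OF a] sx by (auto simp: delta_ob_def Q_ob_def)
  next
    fix f assume f: "f \<in> s_ar C"
    then have "s_dom C f \<in> s_ob C" "s_cod C f \<in> s_ob C" using cat by (auto simp: is_category_def)
    then show "delta_ar (sm f) = Q_ar so sm (sm f)"
    proof -
      have "\<And>a. a \<in> s_ob C \<Longrightarrow> map (\<lambda>x. [x]) (so a) = map so (so a)"
        using LX sx by (fastforce intro: map_cong)
      then show ?thesis using \<open>s_dom C f \<in> s_ob C\<close> \<open>s_cod C f \<in> s_ob C\<close>
        by (simp add: delta_ar_def Q_ar_def sm_def delta_ob_def)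
    qed
  qed
  then show ?thesis by (auto simp: pie_algebra_def)
qed

theorem mainTheorem5:
  fixes C :: "('o, 'm) smc"
  assumes "is_smc C"
  shows "pie_algebra C \<longleftrightarrow> free_monoid_of_objects C"
  using pie_free[OF assms] free_pie[OF assms]
  by (auto simp: pie_algebra_def free_monoid_of_objects_def)

end
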